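(* Let $n,k$ be positive integers and let $Z$ be the graph with vertex set $\{z_{i,j}:1\le i\le k,\ 1\le j\le n\}$ ($k$ columns indexed by $i$, $n$ rows indexed by $j$) where, for $i<i'$, $z_{i,j}z_{i',j'}$ is an edge iff (1) $i$ is odd, $i'=i+1$ and $j>j'$; or (2) $i$ is even, $i'=i+1$ and $j\le j'$; or (3) $i$ is even, $i'$ is odd and $i'\ge i+3$. Then $Z$ is a $k$-letter graph.
   Context: Let $A$ be an alphabet with $k$ letters. A $k$-letter graph is a graph (up to isomorphism) defined by a finite word $a_1a_2\cdots a_m$ over $A$ together with a set $S\subseteq A\times A$: its vertex set is $\{1,\dots,m\}$ and its edge set is $\{pq: p<q,\ (a_p,a_q)\in S\}$. *)

theory Defs
  imports Main
begin

text \<open>A graph is given by a vertex set V and an adjacency predicate E (only its values on V matter).\<close>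

definition letter_adj :: "'b list \<Rightarrow> ('b \<times> 'b) set \<Rightarrow> nat \<Rightarrow> nat \<Rightarrow> bool" where
  "letter_adj w S p q \<longleftrightarrow>
     (p < q \<and> (w ! p, w ! q) \<in> S) \<or> (q < p \<and> (w ! q, w ! p) \<in> S)"

definition iso_letter_graph :: "'a set \<Rightarrow> ('a \<Rightarrow> 'a \<Rightarrow> bool) \<Rightarrow> 'b list \<Rightarrow> ('b \<times> 'b) set \<Rightarrow> bool" where
  "iso_letter_graph V E w S \<longleftrightarrow>
     (\<exists>f. bij_betw f V {..<length w} \<and>
          (\<forall>u\<in>V. \<forall>v\<in>V. E u v \<longleftrightarrow> letter_adj w S (f u) (f v)))"

definition k_letter_graph :: "nat \<Rightarrow> 'a set \<Rightarrow> ('a \<Rightarrow> 'a \<Rightarrow> bool) \<Rightarrow> bool" where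
  "k_letter_graph k V E \<longleftrightarrow>
     (\<exists>(A::nat set) w S. finite A \<and> card A = k \<and> set w \<subseteq> A \<and> S \<subseteq> A \<times> A \<and>
        iso_letter_graph V E w S)"

definition Z_vertices :: "nat \<Rightarrow> nat \<Rightarrow> (nat \<times> nat) set" where
  "Z_vertices n k = {(i, j). 1 \<le> i \<and> i \<le> k \<and> 1 \<le> j \<and> j \<le> n}"

definition Z_rule :: "nat \<times> nat \<Rightarrow> nat \<times> nat \<Rightarrow> bool" where
  "Z_rule u v = (case u of (i, j) \<Rightarrow> case v of (i', j') \<Rightarrow>
      (odd i \<and> i' = i + 1 \<and> j > j') \<or>
      (even i \<and> i' = i + 1 \<and> j \<le> j') \<or>
      (even i \<and> odd i' \<and> i' \<ge> i + 3))"

definition Z_adj :: "nat \<times> nat \<Rightarrow> nat \<times> nat \<Rightarrow> bool" where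
  "Z_adj u v \<longleftrightarrow> (fst u < fst v \<and> Z_rule u v) \<or> (fst v < fst u \<and> Z_rule v u)"

end

theory Submission
  imports Defs
begin

definition fZ :: "nat \<Rightarrow> nat \<times> nat \<Rightarrow> nat" where
  "fZ k u = (snd u - 1) * k + (fst u - 1)"

definition PZ :: "nat \<Rightarrow> nat \<Rightarrow> bool" where
  "PZ a b = ((odd b \<and> a = b + 1) \<or> (even a \<and> b = a + 1) \<or>
     (even a \<and> odd b \<and> b \<ge> a + 3) \<or> (even b \<and> odd a \<and> a \<ge> b + 3))"

lemma aux_md: "(m::nat) < k \<Longrightarrow> (a * k + m) mod k = m \<and> (a * k + m) div k = a"
  by simp

lemma fZ_mod: "1 \<le> i \<Longrightarrow> i \<le> k \<Longrightarrow> fZ k (i,j) mod k = i - 1"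
  unfolding fZ_def fst_conv snd_conv by (rule conjunct1[OF aux_md]) simp

lemma fZ_div: "1 \<le> i \<Longrightarrow> i \<le> k \<Longrightarrow> fZ k (i,j) div k = j - 1"
  unfolding fZ_def fst_conv snd_conv by (rule conjunct2[OF aux_md]) simp

lemma fZ_less:
  assumes "1 \<le> i" "i \<le> k" "1 \<le> i'" "i' \<le> k" "1 \<le> j" "1 \<le> j'"
  shows "fZ k (i,j) < fZ k (i',j') \<longleftrightarrow> j < j' \<or> (j = j' \<and> i < i')"
proof
  assume h: "fZ k (i,j) < fZ k (i',j')"
  have "fZ k (i,j) div k \<le> fZ k (i',j') div k" using h by (simp add: div_le_mono)
  hence "j - 1 \<le> j' - 1" using fZ_div[of i k j] fZ_div[of i' k j'] assms by simp
  hence "j \<le> j'" using assms by linarith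
  moreover have "j = j' \<Longrightarrow> i < i'" using h assms by (simp add: fZ_def)
  ultimately show "j < j' \<or> (j = j' \<and> i < i')" by linarith
next
  assume h: "j < j' \<or> (j = j' \<and> i < i')"
  show "fZ k (i,j) < fZ k (i',j')"
  proof (cases "j < j'")
    case True
    then have "j - 1 + 1 \<le> j' - 1" using assms by linarith
    then have "(j - 1 + 1) * k \<le> (j' - 1) * k" by (rule mult_right_mono) simp
    moreover have "fZ k (i,j) < (j - 1) * k + k" using assms by (simp add: fZ_def)
    moreover have "(j - 1) * k + k = (j - 1 + 1) * k" by simp
    moreover have "(j' - 1) * k \<le> fZ k (i',j')" by (simp add: fZ_def)
    ultimately show ?thesis by linarith
  next
    case False
    then have e: "j = j'" "i < i'" using h by auto
    show ?thesis unfolding fZ_def fst_conv snd_conv e(1) using e(2) assms(1) by linarith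
  qed
qed

lemma key:
  fixes i j i' j' :: nat
  shows "Z_adj (i,j) (i',j') \<longleftrightarrow>
     ((j < j' \<or> (j = j' \<and> i < i')) \<and> PZ i i') \<or> ((j' < j \<or> (j' = j \<and> i' < i)) \<and> PZ i' i)"
proof -
  have gen: "Z_adj (i,j) (i',j') \<longleftrightarrow>
     ((j < j' \<or> (j = j' \<and> i < i')) \<and> PZ i i') \<or> ((j' < j \<or> (j' = j \<and> i' < i)) \<and> PZ i' i)"
    if lt: "i < i'" for i j i' j' :: nat
  proof (cases "i' = i + 1")
    case True
    have "Z_adj (i,j) (i',j') \<longleftrightarrow> (odd i \<and> j > j') \<or> (even i \<and> j \<le> j')"
      using True by (simp add: Z_adj_def Z_rule_def)
    moreover have "PZ i i' \<longleftrightarrow> even i" using True by (auto simp: PZ_def)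
    moreover have "PZ i' i \<longleftrightarrow> odd i" using True by (auto simp: PZ_def)
    ultimately show ?thesis using lt by auto
  next
    case False
    have "Z_adj (i,j) (i',j') \<longleftrightarrow> even i \<and> odd i' \<and> i' \<ge> i + 3"
      using False lt by (auto simp: Z_adj_def Z_rule_def)
    moreover have "PZ i i' \<longleftrightarrow> even i \<and> odd i' \<and> i' \<ge> i + 3" using False lt by (auto simp: PZ_def)
    moreover have "PZ i' i \<longleftrightarrow> even i \<and> odd i' \<and> i' \<ge> i + 3" using False lt by (auto simp: PZ_def)
    ultimately show ?thesis using lt by auto
  qed
  consider "i < i'" | "i' < i" | "i = i'" by linarith
  then show ?thesis
  proof cases
    case 1 then show ?thesis by (rule gen)
  next
    case 2
    have "Z_adj (i,j) (i',j') = Z_adj (i',j') (i,j)" by (auto simp: Z_adj_def)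
    then show ?thesis using gen[OF 2, of j' j] by auto
  next
    case 3 then show ?thesis by (simp add: Z_adj_def PZ_def)
  qed
qed

theorem lemma15:
  fixes n k :: nat
  assumes "n \<ge> 1" and "k \<ge> 1"
  shows "k_letter_graph k (Z_vertices n k) Z_adj"
proof -
  define w where "w = map (\<lambda>p. p mod k + 1) [0..<n*k]"
  define S where "S = {(a,b). a \<in> {1..k} \<and> b \<in> {1..k} \<and> PZ a b}"
  have lw: "length w = n * k" by (simp add: w_def)
  have fZ_lt: "fZ k u < n * k" if "u \<in> Z_vertices n k" for u
  proof -
    obtain i j where u0: "u = (i,j)" by (cases u)
    then have u: "u = (i,j)" "1 \<le> i" "i \<le> k" "1 \<le> j" "j \<le> n"
      using that by (auto simp: Z_vertices_def)
    have "j - 1 + 1 \<le> n" using u by simp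
    then have "(j - 1 + 1) * k \<le> n * k" by (rule mult_right_mono) simp
    moreover have "fZ k u < (j - 1) * k + k" using u by (simp add: fZ_def)
    moreover have "(j - 1) * k + k = (j - 1 + 1) * k" by simp
    ultimately show ?thesis by linarith
  qed
  have wf: "w ! fZ k u = fst u" if "u \<in> Z_vertices n k" for u
  proof -
    obtain i j where u0: "u = (i,j)" by (cases u)
    then have u: "u = (i,j)" "1 \<le> i" "i \<le> k" "1 \<le> j" "j \<le> n"
      using that by (auto simp: Z_vertices_def)
    show ?thesis using fZ_lt[OF that] u fZ_mod[of i k j] by (simp add: w_def)
  qed
  have bij: "bij_betw (fZ k) (Z_vertices n k) {..<length w}"
  proof (rule bij_betw_byWitness[where f' = "\<lambda>p. (p mod k + 1, p div k + 1)"])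
    show "\<forall>a\<in>Z_vertices n k. (fZ k a mod k + 1, fZ k a div k + 1) = a"
      using fZ_mod fZ_div by (auto simp: Z_vertices_def)
    show "\<forall>a'\<in>{..<length w}. fZ k (a' mod k + 1, a' div k + 1) = a'"
      by (simp add: fZ_def)
    show "fZ k ` Z_vertices n k \<subseteq> {..<length w}" using fZ_lt lw by auto
    show "(\<lambda>p. (p mod k + 1, p div k + 1)) ` {..<length w} \<subseteq> Z_vertices n k"
    proof
      fix x assume "x \<in> (\<lambda>p. (p mod k + 1, p div k + 1)) ` {..<length w}"
      then obtain p where p: "p < n * k" "x = (p mod k + 1, p div k + 1)" using lw by auto
      have "p div k < n" using p(1) by (simp add: less_mult_imp_div_less)
      moreover have "p mod k < k" using assms(2) by simp
      ultimately show "x \<in> Z_vertices n k" using p by (auto simp: Z_vertices_def)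
    qed
  qed
  have adj: "Z_adj u v \<longleftrightarrow> letter_adj w S (fZ k u) (fZ k v)"
    if "u \<in> Z_vertices n k" "v \<in> Z_vertices n k" for u v
  proof -
    obtain i j where u0: "u = (i,j)" by (cases u)
    then have u: "u = (i,j)" "1 \<le> i" "i \<le> k" "1 \<le> j" "j \<le> n"
      using that by (auto simp: Z_vertices_def)
    obtain i' j' where v0: "v = (i',j')" by (cases v)
    then have v: "v = (i',j')" "1 \<le> i'" "i' \<le> k" "1 \<le> j'" "j' \<le> n"
      using that by (auto simp: Z_vertices_def)
    have l1: "fZ k (i,j) < fZ k (i',j') \<longleftrightarrow> j < j' \<or> (j = j' \<and> i < i')"
      using fZ_less u v by blast
    have l2: "fZ k (i',j') < fZ k (i,j) \<longleftrightarrow> j' < j \<or> (j' = j \<and> i' < i)"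
      using fZ_less u v by blast
    show ?thesis
      unfolding letter_adj_def wf[OF that(1)] wf[OF that(2)]
      using u v l1 l2 key[of i j i' j'] by (auto simp: S_def)
  qed
  have "iso_letter_graph (Z_vertices n k) Z_adj w S"
    unfolding iso_letter_graph_def using bij adj by blast
  moreover have "set w \<subseteq> {1..k}"
  proof
    fix x assume "x \<in> set w"
    then obtain p where "x = p mod k + 1" by (auto simp: w_def)
    moreover have "p mod k < k" using assms(2) by simp
    ultimately show "x \<in> {1..k}" by simp
  qed
  moreover have "S \<subseteq> {1..k} \<times> {1..k}" by (auto simp: S_def)
  ultimately show ?thesis unfolding k_letter_graph_def
    by (intro exI[of _ "{1..k}"] exI[of _ w] exI[of _ S]) simp
qed

end
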